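(* Let $S$ be a Boolean inverse monoid satisfying condition (H). Then: (1) for each $s\in S$ there is an idempotent $e_s$ such that $e_s=\bigvee_{c\in C}c$ for every finite cover $C\subseteq\mathcal J_s$ of $\mathcal J_s$, and $\mathcal J_s=\{e\in E(S): e\le e_s\}$; (2) $e_{s^*}=e_s$ for all $s\in S$; (3) $e_{st}\le ss^*$ and $e_{st}\le t^*t$ for all $s,t\in S$; (4) $e_{s^*t}e_{t^*r}\le e_{s^*r}$ for all $s,t,r\in S$.
   Context: An inverse semigroup is a semigroup $S$ in which every $s$ has a unique $s^*$ with $ss^*s=s$, $s^*ss^*=s^*$; assumed countable with a zero. $E(S)$ is its set of idempotents; natural order $s\le t$ iff $ts^*s=s$ (on idempotents $e\le f$ iff $ef=e$). A Boolean inverse monoid is an inverse monoid in which every finite compatible set (pairwise $s^*t,st^*\in E(S)$) has a join, multiplication distributes over such joins, and $E(S)$ is a Boolean algebra. For $Z\subseteq W\subseteq E(S)$, $Z$ is a cover of $W$ if every nonzero $w\in W$ has some $z\in Z$ with $zw\ne0$. For $s\in S$ let $\mathcal J_s=\{e\in E(S): se=e\}$. Condition (H): for every $s\in S$, $\mathcal J_s$ admits a finite cover (by a finite subset of $\mathcal J_s$). *)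

theory Defs
  imports Main "HOL-Library.Countable_Set"
begin

text \<open>An inverse monoid with zero is presented by its multiplication m, the inverse
  operation st (s maps to s*), the zero z and the identity u, on the whole carrier type.\<close>

definition inverse_semigroup_zero ::
    "('a \<Rightarrow> 'a \<Rightarrow> 'a) \<Rightarrow> ('a \<Rightarrow> 'a) \<Rightarrow> 'a \<Rightarrow> bool" where
  "inverse_semigroup_zero m st z \<longleftrightarrow>
     (\<forall>a b c. m (m a b) c = m a (m b c)) \<and>
     (\<forall>s. m (m s (st s)) s = s \<and> m (m (st s) s) (st s) = st s) \<and>
     (\<forall>s t. m (m s t) s = s \<and> m (m t s) t = t \<longrightarrow> t = st s) \<and>
     (\<forall>s. m z s = z \<and> m s z = z)"

definition idems :: "('a \<Rightarrow> 'a \<Rightarrow> 'a) \<Rightarrow> 'a set" where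
  "idems m = {e. m e e = e}"

definition nat_le :: "('a \<Rightarrow> 'a \<Rightarrow> 'a) \<Rightarrow> ('a \<Rightarrow> 'a) \<Rightarrow> 'a \<Rightarrow> 'a \<Rightarrow> bool" where
  "nat_le m st s t \<longleftrightarrow> m t (m (st s) s) = s"

definition compatible_set :: "('a \<Rightarrow> 'a \<Rightarrow> 'a) \<Rightarrow> ('a \<Rightarrow> 'a) \<Rightarrow> 'a set \<Rightarrow> bool" where
  "compatible_set m st A \<longleftrightarrow>
     (\<forall>s\<in>A. \<forall>t\<in>A. m (st s) t \<in> idems m \<and> m s (st t) \<in> idems m)"

definition is_join :: "('a \<Rightarrow> 'a \<Rightarrow> 'a) \<Rightarrow> ('a \<Rightarrow> 'a) \<Rightarrow> 'a set \<Rightarrow> 'a \<Rightarrow> bool" where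
  "is_join m st A j \<longleftrightarrow>
     (\<forall>a\<in>A. nat_le m st a j) \<and> (\<forall>v. (\<forall>a\<in>A. nat_le m st a v) \<longrightarrow> nat_le m st j v)"

definition boolean_inverse_monoid ::
    "('a \<Rightarrow> 'a \<Rightarrow> 'a) \<Rightarrow> ('a \<Rightarrow> 'a) \<Rightarrow> 'a \<Rightarrow> 'a \<Rightarrow> bool" where
  "boolean_inverse_monoid m st z u \<longleftrightarrow>
     inverse_semigroup_zero m st z \<and>
     (\<forall>s. m u s = s \<and> m s u = s) \<and>
     \<comment> \<open>finite compatible sets have joins\<close>
     (\<forall>A. finite A \<and> compatible_set m st A \<longrightarrow> (\<exists>j. is_join m st A j)) \<and>
     \<comment> \<open>multiplication distributes over such joins\<close>
     (\<forall>A j s. finite A \<and> compatible_set m st A \<and> is_join m st A j \<longrightarrow>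
         is_join m st ((\<lambda>a. m s a) ` A) (m s j) \<and> is_join m st ((\<lambda>a. m a s) ` A) (m j s)) \<and>
     \<comment> \<open>E(S) is a Boolean algebra (bounded by z and u, meets are products, joins
         are the joins above, distributivity from the previous clause): complements\<close>
     (\<forall>e\<in>idems m. \<exists>f\<in>idems m. m e f = z \<and> is_join m st {e, f} u)"

definition is_cover :: "('a \<Rightarrow> 'a \<Rightarrow> 'a) \<Rightarrow> 'a \<Rightarrow> 'a set \<Rightarrow> 'a set \<Rightarrow> bool" where
  "is_cover m z Z W \<longleftrightarrow> (\<forall>w\<in>W. w \<noteq> z \<longrightarrow> (\<exists>c\<in>Z. m c w \<noteq> z))"

definition Jset :: "('a \<Rightarrow> 'a \<Rightarrow> 'a) \<Rightarrow> 'a \<Rightarrow> 'a set" where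
  "Jset m s = {e \<in> idems m. m s e = e}"

definition condition_H :: "('a \<Rightarrow> 'a \<Rightarrow> 'a) \<Rightarrow> 'a \<Rightarrow> bool" where
  "condition_H m z \<longleftrightarrow>
     (\<forall>s. \<exists>C. finite C \<and> C \<subseteq> Jset m s \<and> is_cover m z C (Jset m s))"

end

theory Submission
  imports Defs
begin
locale isz =
  fixes m :: "'a \<Rightarrow> 'a \<Rightarrow> 'a" (infixl "\<cdot>" 70) and st :: "'a \<Rightarrow> 'a" and z :: 'a
  assumes isz: "inverse_semigroup_zero m st z"
begin

lemma assoc: "(a \<cdot> b) \<cdot> c = a \<cdot> (b \<cdot> c)"
  using isz unfolding inverse_semigroup_zero_def by blast
lemma inv1: "s \<cdot> st s \<cdot> s = s"
  using isz unfolding inverse_semigroup_zero_def by blast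
lemma inv2: "st s \<cdot> s \<cdot> st s = st s"
  using isz unfolding inverse_semigroup_zero_def by blast
lemma uniq: "s \<cdot> t \<cdot> s = s \<Longrightarrow> t \<cdot> s \<cdot> t = t \<Longrightarrow> t = st s"
  using isz unfolding inverse_semigroup_zero_def by blast
lemma zl[simp]: "z \<cdot> s = z"
  using isz unfolding inverse_semigroup_zero_def by blast
lemma zr[simp]: "s \<cdot> z = z"
  using isz unfolding inverse_semigroup_zero_def by blast

lemma inv1': "s \<cdot> (st s \<cdot> s) = s" using inv1 assoc by metis
lemma inv2': "st s \<cdot> (s \<cdot> st s) = st s" using inv2 assoc by metis

lemma inv1w: "s \<cdot> (st s \<cdot> (s \<cdot> w)) = s \<cdot> w" by (metis assoc inv1)
lemma inv2w: "st s \<cdot> (s \<cdot> (st s \<cdot> w)) = st s \<cdot> w" by (metis assoc inv2)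

lemma stst[simp]: "st (st s) = s"
  using uniq[of "st s" s] inv1 inv2 by metis

lemma idem_st: "e \<cdot> e = e \<Longrightarrow> st e = e"
  using uniq[of e e] by metis

lemma idem_left: "e \<cdot> e = e \<Longrightarrow> e \<cdot> (e \<cdot> w) = e \<cdot> w"
  by (metis assoc)

lemma prod_idem: assumes e: "e \<cdot> e = e" and f: "f \<cdot> f = f" shows "e \<cdot> f \<cdot> (e \<cdot> f) = e \<cdot> f"
proof -
  define x where "x = st (e \<cdot> f)"
  define y where "y = f \<cdot> x \<cdot> e"
  have 1: "e \<cdot> f \<cdot> y \<cdot> (e \<cdot> f) = e \<cdot> f"
  proof -
    have "e \<cdot> f \<cdot> y \<cdot> (e \<cdot> f) = (e \<cdot> f) \<cdot> x \<cdot> (e \<cdot> f)"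
      unfolding y_def by (simp add: assoc idem_left[OF e] idem_left[OF f] e f)
    also have "\<dots> = e \<cdot> f" unfolding x_def by (rule inv1)
    finally show ?thesis .
  qed
  have 2: "y \<cdot> (e \<cdot> f) \<cdot> y = y"
  proof -
    have "y \<cdot> (e \<cdot> f) \<cdot> y = f \<cdot> (x \<cdot> (e \<cdot> f) \<cdot> x) \<cdot> e"
      unfolding y_def by (simp add: assoc idem_left[OF e] idem_left[OF f] e f)
    also have "x \<cdot> (e \<cdot> f) \<cdot> x = x" unfolding x_def by (rule inv2)
    finally show ?thesis unfolding y_def .
  qed
  have yx: "y = x" using uniq[OF 1 2] x_def by simp
  have "x \<cdot> x = x"
  proof -
    have "x \<cdot> x = y \<cdot> y" using yx by simp
    also have "\<dots> = f \<cdot> (x \<cdot> (e \<cdot> f) \<cdot> x) \<cdot> e"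
      unfolding y_def by (simp add: assoc idem_left[OF e] idem_left[OF f] e f)
    also have "x \<cdot> (e \<cdot> f) \<cdot> x = x" unfolding x_def by (rule inv2)
    finally show ?thesis using yx y_def by simp
  qed
  hence "st x = x" by (rule idem_st)
  hence "e \<cdot> f = x" unfolding x_def by simp
  thus ?thesis using \<open>x \<cdot> x = x\<close> by simp
qed

lemma idem_comm: assumes e: "e \<cdot> e = e" and f: "f \<cdot> f = f" shows "e \<cdot> f = f \<cdot> e"
proof -
  have ef: "e \<cdot> f \<cdot> (e \<cdot> f) = e \<cdot> f" by (rule prod_idem[OF e f])
  have fe: "f \<cdot> e \<cdot> (f \<cdot> e) = f \<cdot> e" by (rule prod_idem[OF f e])
  have 1: "e \<cdot> f \<cdot> (f \<cdot> e) \<cdot> (e \<cdot> f) = e \<cdot> f"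
    using ef by (simp add: assoc idem_left[OF e] idem_left[OF f] e f)
  have 2: "f \<cdot> e \<cdot> (e \<cdot> f) \<cdot> (f \<cdot> e) = f \<cdot> e"
    using fe by (simp add: assoc idem_left[OF e] idem_left[OF f] e f)
  have "f \<cdot> e = st (e \<cdot> f)" by (rule uniq[OF 1 2])
  also have "\<dots> = e \<cdot> f" by (rule idem_st[OF ef])
  finally show ?thesis by simp
qed

lemma idem_ss: "s \<cdot> st s \<cdot> (s \<cdot> st s) = s \<cdot> st s"
  by (metis assoc inv1)
lemma idem_ss2: "st s \<cdot> s \<cdot> (st s \<cdot> s) = st s \<cdot> s"
  by (metis assoc inv2)

lemma st_prod: "st (a \<cdot> b) = st b \<cdot> st a"
proof -
  have c: "(a \<cdot> st a) \<cdot> (b \<cdot> st b) = (b \<cdot> st b) \<cdot> (a \<cdot> st a)" for a b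
    by (rule idem_comm[OF idem_ss idem_ss])
  have c2: "(st a \<cdot> a) \<cdot> (b \<cdot> st b) = (b \<cdot> st b) \<cdot> (st a \<cdot> a)"
    by (rule idem_comm[OF idem_ss2 idem_ss])
  have 1: "a \<cdot> b \<cdot> (st b \<cdot> st a) \<cdot> (a \<cdot> b) = a \<cdot> b"
  proof -
    have "a \<cdot> b \<cdot> (st b \<cdot> st a) \<cdot> (a \<cdot> b) = a \<cdot> ((b \<cdot> st b) \<cdot> (st a \<cdot> a)) \<cdot> b"
      by (simp add: assoc)
    also have "\<dots> = a \<cdot> ((st a \<cdot> a) \<cdot> (b \<cdot> st b)) \<cdot> b" using c2 by simp
    also have "\<dots> = (a \<cdot> st a \<cdot> a) \<cdot> (b \<cdot> st b \<cdot> b)" by (simp add: assoc)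
    finally show ?thesis by (simp add: inv1)
  qed
  have 2: "st b \<cdot> st a \<cdot> (a \<cdot> b) \<cdot> (st b \<cdot> st a) = st b \<cdot> st a"
  proof -
    have "st b \<cdot> st a \<cdot> (a \<cdot> b) \<cdot> (st b \<cdot> st a) = st b \<cdot> ((st a \<cdot> a) \<cdot> (b \<cdot> st b)) \<cdot> st a"
      by (simp add: assoc)
    also have "\<dots> = st b \<cdot> ((b \<cdot> st b) \<cdot> (st a \<cdot> a)) \<cdot> st a" using c2 by simp
    also have "\<dots> = (st b \<cdot> b \<cdot> st b) \<cdot> (st a \<cdot> a \<cdot> st a)" by (simp add: assoc)
    finally show ?thesis by (simp add: inv2)
  qed
  show ?thesis using uniq[OF 1 2] by simp
qed

lemma zz[simp]: "z \<cdot> z = z" by simp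
lemma stz[simp]: "st z = z" using idem_st[OF zz] .

lemma nat_le_idem: "e \<cdot> e = e \<Longrightarrow> nat_le m st e t \<longleftrightarrow> t \<cdot> e = e"
  unfolding nat_le_def using idem_st by simp

lemma nat_le_z: "nat_le m st z t" by (simp add: nat_le_def)
lemma nat_le_refl: "nat_le m st s s" by (simp add: nat_le_def inv1 flip: assoc)

lemma idems_iff: "e \<in> idems m \<longleftrightarrow> e \<cdot> e = e" by (simp add: idems_def)

lemma Jset_iff: "e \<in> Jset m s \<longleftrightarrow> e \<cdot> e = e \<and> s \<cdot> e = e"
  by (simp add: Jset_def idems_def)

lemma Jset_st_sub: "Jset m s \<subseteq> Jset m (st s)"
proof
  fix e assume "e \<in> Jset m s"
  hence e: "e \<cdot> e = e" and se: "s \<cdot> e = e" by (auto simp: Jset_iff)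
  have "e = st e" using idem_st[OF e] by simp
  also have "\<dots> = e \<cdot> st s" using se st_prod[of s e] idem_st[OF e] by simp
  finally have es: "e \<cdot> st s = e" by simp
  have "st s \<cdot> e = st s \<cdot> s \<cdot> e \<cdot> st s" using se es by (simp add: assoc)
  also have "\<dots> = e \<cdot> (st s \<cdot> s) \<cdot> st s" using idem_comm[OF idem_ss2 e, of s] by simp
  also have "\<dots> = e \<cdot> st s" by (simp add: assoc inv2')
  finally show "e \<in> Jset m (st s)" using es e by (simp add: Jset_iff)
qed

lemma Jset_st: "Jset m (st s) = Jset m s"
  using Jset_st_sub[of s] Jset_st_sub[of "st s"] by simp

end

locale bim = isz +
  fixes u
  assumes bim: "boolean_inverse_monoid m st z u"
begin

lemma ul[simp]: "u \<cdot> s = s" using bim unfolding boolean_inverse_monoid_def by blast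
lemma ur[simp]: "s \<cdot> u = s" using bim unfolding boolean_inverse_monoid_def by blast
lemma joins: "finite A \<Longrightarrow> compatible_set m st A \<Longrightarrow> \<exists>j. is_join m st A j"
  using bim unfolding boolean_inverse_monoid_def by blast
lemma distr: "finite A \<Longrightarrow> compatible_set m st A \<Longrightarrow> is_join m st A j \<Longrightarrow>
         is_join m st ((\<lambda>a. s \<cdot> a) ` A) (s \<cdot> j)"
  using bim unfolding boolean_inverse_monoid_def by blast
lemma compl: "e \<cdot> e = e \<Longrightarrow> \<exists>f. f \<cdot> f = f \<and> e \<cdot> f = z \<and> is_join m st {e, f} u"
  using bim unfolding boolean_inverse_monoid_def idems_def by blast

lemma compat_idems: "\<forall>c\<in>C. c \<cdot> c = c \<Longrightarrow> compatible_set m st C"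
  unfolding compatible_set_def idems_def using idem_st prod_idem by simp

lemma key:
  assumes fin: "finite C" and sub: "C \<subseteq> Jset m s" and cov: "is_cover m z C (Jset m s)"
  shows "\<exists>j. is_join m st C j \<and> j \<cdot> j = j \<and> Jset m s = {e. e \<cdot> e = e \<and> j \<cdot> e = e}"
proof -
  have Cid: "\<forall>c\<in>C. c \<cdot> c = c" and Cs: "\<forall>c\<in>C. s \<cdot> c = c" using sub by (auto simp: Jset_iff)
  have cC: "compatible_set m st C" using compat_idems[OF Cid] .
  obtain j where jj: "is_join m st C j" using joins[OF fin cC] by blast
  have "\<forall>c\<in>C. nat_le m st c u" using Cid nat_le_idem by simp
  hence "nat_le m st j u" using jj unfolding is_join_def by blast
  hence sj: "st j \<cdot> j = j" unfolding nat_le_def by simp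
  have jid: "j \<cdot> j = j" using idem_ss2[of j] sj by simp
  have "is_join m st ((\<lambda>a. s \<cdot> a) ` C) (s \<cdot> j)" using distr[OF fin cC jj] .
  moreover have "(\<lambda>a. s \<cdot> a) ` C = C" using Cs by force
  ultimately have "\<forall>c\<in>C. nat_le m st c (s \<cdot> j)" unfolding is_join_def by simp
  hence "nat_le m st j (s \<cdot> j)" using jj unfolding is_join_def by blast
  hence sjj: "s \<cdot> j = j" using nat_le_idem[OF jid] by (simp add: assoc jid)
  have "Jset m s = {e. e \<cdot> e = e \<and> j \<cdot> e = e}"
  proof (intro set_eqI iffI)
    fix e assume "e \<in> {e. e \<cdot> e = e \<and> j \<cdot> e = e}"
    hence e: "e \<cdot> e = e" and je: "j \<cdot> e = e" by auto
    have "s \<cdot> e = s \<cdot> j \<cdot> e" using je by (simp add: assoc)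
    thus "e \<in> Jset m s" using sjj je e by (simp add: Jset_iff)
  next
    fix e assume eJ: "e \<in> Jset m s"
    hence e: "e \<cdot> e = e" and se: "s \<cdot> e = e" by (auto simp: Jset_iff)
    obtain f where f: "f \<cdot> f = f" and jf: "j \<cdot> f = z" and jfu: "is_join m st {j, f} u"
      using compl[OF jid] by blast
    have ef: "e \<cdot> f = z"
    proof (rule ccontr)
      assume ne: "e \<cdot> f \<noteq> z"
      have "e \<cdot> f \<in> Jset m s" using prod_idem[OF e f] se by (simp add: Jset_iff flip: assoc)
      then obtain c where cC: "c \<in> C" and cne: "c \<cdot> (e \<cdot> f) \<noteq> z"
        using cov ne unfolding is_cover_def by blast
      have cid: "c \<cdot> c = c" using Cid cC by simp
      have "nat_le m st c j" using jj cC unfolding is_join_def by blast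
      hence jc: "j \<cdot> c = c" using nat_le_idem[OF cid] by simp
      have ce: "c \<cdot> e \<cdot> (c \<cdot> e) = c \<cdot> e" using prod_idem[OF cid e] .
      have "c \<cdot> (e \<cdot> f) = j \<cdot> (c \<cdot> e) \<cdot> f" using jc by (metis assoc)
      also have "\<dots> = c \<cdot> e \<cdot> j \<cdot> f" using idem_comm[OF jid ce] by simp
      also have "\<dots> = z" using jf by (simp add: assoc)
      finally show False using cne by simp
    qed
    have fin2: "finite {j, f}" by simp
    have c2: "compatible_set m st {j, f}" using compat_idems jid f by simp
    have "is_join m st ((\<lambda>a. e \<cdot> a) ` {j, f}) (e \<cdot> u)" using distr[OF fin2 c2 jfu] .
    hence J: "is_join m st {e \<cdot> j, z} e" using ef by simp
    have "\<forall>a\<in>{e \<cdot> j, z}. nat_le m st a (e \<cdot> j)" using nat_le_refl nat_le_z by simp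
    hence "nat_le m st e (e \<cdot> j)" using J unfolding is_join_def by blast
    hence "e \<cdot> j \<cdot> e = e" using nat_le_idem[OF e] by simp
    hence "e \<cdot> j = e" using idem_comm[OF jid e] e by (metis assoc)
    hence "j \<cdot> e = e" using idem_comm[OF jid e] by simp
    thus "e \<in> {e. e \<cdot> e = e \<and> j \<cdot> e = e}" using e by simp
  qed
  thus ?thesis using jj jid by blast
qed

lemma down_uniq:
  assumes "j \<cdot> j = j" "j' \<cdot> j' = j'" "{e. e \<cdot> e = e \<and> j \<cdot> e = e} = {e. e \<cdot> e = e \<and> j' \<cdot> e = e}"
  shows "j = j'"
proof -
  have "j' \<cdot> j = j" using assms by blast
  moreover have "j \<cdot> j' = j'" using assms by blast
  ultimately show ?thesis using idem_comm[OF assms(1,2)] by simp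
qed

lemma ex_top: assumes "condition_H m z"
  shows "\<exists>j. j \<cdot> j = j \<and> Jset m s = {e. e \<cdot> e = e \<and> j \<cdot> e = e}"
proof -
  obtain C where "finite C" "C \<subseteq> Jset m s" "is_cover m z C (Jset m s)"
    using assms unfolding condition_H_def by blast
  from key[OF this] show ?thesis by blast
qed

end

theorem mainTheorem5:
  fixes m :: "'a \<Rightarrow> 'a \<Rightarrow> 'a" and st :: "'a \<Rightarrow> 'a" and z u :: 'a
  assumes "countable (UNIV :: 'a set)"
    and "boolean_inverse_monoid m st z u"
    and "condition_H m z"
  shows "\<exists>ef :: 'a \<Rightarrow> 'a.
     (\<forall>s. ef s \<in> idems m \<and>
          (\<forall>C. finite C \<and> C \<subseteq> Jset m s \<and> is_cover m z C (Jset m s) \<longrightarrow> is_join m st C (ef s)) \<and>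
          Jset m s = {e \<in> idems m. nat_le m st e (ef s)}) \<and>
     (\<forall>s. ef (st s) = ef s) \<and>
     (\<forall>s t. nat_le m st (ef (m s t)) (m s (st s)) \<and> nat_le m st (ef (m s t)) (m (st t) t)) \<and>
     (\<forall>s t r. nat_le m st (m (ef (m (st s) t)) (ef (m (st t) r))) (ef (m (st s) r)))"
proof -
  interpret bim m st z u
    using assms(2) unfolding bim_def isz_def bim_axioms_def boolean_inverse_monoid_def by blast
  define D where "D j = {e. m e e = e \<and> m j e = e}" for j
  define ef where "ef s = (SOME j. m j j = j \<and> Jset m s = D j)" for s
  have efp: "m (ef s) (ef s) = ef s \<and> Jset m s = D (ef s)" for s
    unfolding ef_def D_def by (rule someI_ex, rule ex_top[OF assms(3)])
  have efid: "m (ef s) (ef s) = ef s" for s using efp[of s] by (rule conjunct1)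
  have efD: "Jset m s = D (ef s)" for s using efp[of s] by (rule conjunct2)
  have efJ: "ef s \<in> Jset m s" for s unfolding efD D_def using efid by simp
  have Jle: "x \<in> Jset m s \<Longrightarrow> m (ef s) x = x" for x s unfolding efD D_def by simp
  have Jset_eq: "Jset m s = {e \<in> idems m. nat_le m st e (ef s)}" for s
    unfolding efD D_def by (auto simp: idems_iff nat_le_idem)
  have P1: "is_join m st C (ef s)" if h: "finite C" "C \<subseteq> Jset m s" "is_cover m z C (Jset m s)" for C s
  proof -
    obtain j where j: "is_join m st C j" "m j j = j" "Jset m s = {e. m e e = e \<and> m j e = e}"
      using key[OF h] by blast
    have "j = ef s" using down_uniq[OF j(2) efid[of s]] j(3) efD[of s] unfolding D_def by simp
    thus ?thesis using j(1) by simp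
  qed
  have P2: "ef (st s) = ef s" for s unfolding ef_def using Jset_st by simp
  have P3: "nat_le m st (ef (m s t)) (m s (st s)) \<and> nat_le m st (ef (m s t)) (m (st t) t)" for s t
  proof -
    let ?e = "ef (m s t)"
    have e: "m ?e ?e = ?e" by (rule efid)
    have ste: "m (m s t) ?e = ?e" using efJ by (simp add: Jset_iff)
    have "?e \<in> Jset m (m (st t) (st s))" using efJ[of "m s t"] Jset_st[of "m s t"] st_prod[of s t]
      by simp
    hence "m (m (st t) (st s)) ?e = ?e" by (simp add: Jset_iff)
    hence tse: "m (st t) (m (st s) ?e) = ?e" by (simp add: assoc)
    have 1: "m (m s (st s)) ?e = ?e"
      using ste by (metis assoc inv1)
    have 2: "m (m (st t) t) ?e = ?e"
      using tse by (metis assoc inv2)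
    show ?thesis using 1 2 nat_le_idem[OF e] by simp
  qed
  have P4: "nat_le m st (m (ef (m (st s) t)) (ef (m (st t) r))) (ef (m (st s) r))" for s t r
  proof -
    define a where "a = ef (m (st s) t)"
    define b where "b = ef (m (st t) r)"
    have a: "m a a = a" and b: "m b b = b" unfolding a_def b_def by (rule efid)+
    have sa: "m (m (st s) t) a = a" using efJ unfolding a_def by (simp add: Jset_iff)
    have tb: "m (m (st t) r) b = b" using efJ unfolding b_def by (simp add: Jset_iff)
    define x where "x = m a b"
    have x: "m x x = x" unfolding x_def by (rule prod_idem[OF a b])
    define p where "p = m t (m a (st t))"
    have p: "m p p = p"
    proof -
      have "m p p = m t (m (m a (m (st t) t)) (m a (st t)))" unfolding p_def by (simp add: assoc)
      also have "m a (m (st t) t) = m (m (st t) t) a" using idem_comm[OF a idem_ss2] .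
      finally show ?thesis unfolding p_def by (simp add: assoc idem_left[OF a] inv1w)
    qed
    define q where "q = m (st s) (m p s)"
    have q: "m q q = q"
    proof -
      have "m q q = m (st s) (m (m p (m s (st s))) (m p s))" unfolding q_def by (simp add: assoc)
      also have "m p (m s (st s)) = m (m s (st s)) p" using idem_comm[OF p idem_ss] .
      finally show ?thesis unfolding q_def using p by (simp add: assoc idem_left[OF p] inv2w)
    qed
    have qs: "m q (st s) = m (st s) p"
    proof -
      have "m q (st s) = m (st s) (m p (m s (st s)))" unfolding q_def by (simp add: assoc)
      also have "m p (m s (st s)) = m (m s (st s)) p" using idem_comm[OF p idem_ss] .
      finally show ?thesis by (simp add: assoc inv2w)
    qed
    have xe: "x = m q (m (m (st s) r) b)"
    proof -
      have "x = m (m (m (st s) t) a) (m (m (st t) r) b)" unfolding x_def using sa tb by simp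
      also have "\<dots> = m (m (st s) p) (m r b)" unfolding p_def by (simp add: assoc)
      also have "\<dots> = m (m q (st s)) (m r b)" using qs by simp
      also have "\<dots> = m q (m (m (st s) r) b)" by (simp add: assoc)
      finally show ?thesis .
    qed
    define w where "w = m (m (st s) r) b"
    have "m w x = x"
    proof -
      have xw: "x = m q w" using xe w_def by simp
      have "x = st x" using idem_st[OF x] by simp
      also have "\<dots> = m (st w) q" using xw st_prod idem_st[OF q] by simp
      finally have x2: "x = m (st w) q" .
      have "x = m x x" using x by simp
      also have "\<dots> = m q (m (m w (st w)) q)" using xw x2 by (simp add: assoc)
      also have "m (m w (st w)) q = m q (m w (st w))" using idem_comm[OF idem_ss q] .
      finally have x3: "x = m q (m w (st w))" using q by (simp add: idem_left[OF q])
      have "m w x = m w (m (st w) q)" using x2 by simp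
      also have "\<dots> = m (m w (st w)) q" by (simp add: assoc)
      also have "\<dots> = m q (m w (st w))" using idem_comm[OF idem_ss q] .
      finally show ?thesis using x3 by simp
    qed
    hence "m (m (st s) r) (m b x) = x" unfolding w_def by (simp add: assoc)
    moreover have "m b x = x" unfolding x_def
      using idem_comm[OF a b] b by (metis assoc)
    ultimately have "m (m (st s) r) x = x" by simp
    hence "x \<in> Jset m (m (st s) r)" using x by (simp add: Jset_iff)
    hence "m (ef (m (st s) r)) x = x" by (rule Jle)
    thus ?thesis using nat_le_idem[OF x] unfolding x_def a_def b_def by simp
  qed
  show ?thesis
    apply (rule exI[of _ ef])
    using efid P1 Jset_eq P2 P3 P4 by (simp add: idems_iff)
qed

end
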